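(* Let $S$ be a set of mutually orthogonal genuinely entangled pure states of three qubits, $\mathbb{C}^2\otimes\mathbb{C}^2\otimes\mathbb{C}^2$, that spans a proper subspace such that, for every bipartition of the three qubits, the orthogonal complement of the span of $S$ contains no pure state entangled with respect to that bipartition. Then $|S|\in\{6,7\}$, and both cardinalities $6$ and $7$ occur for such sets.
   Context: The bipartitions of three qubits $A,B,C$ are $A|BC$, $B|AC$, $C|AB$. A pure three-qubit state is genuinely entangled if it is not a product state with respect to any of these bipartitions; it is fully separable if it is of the form $|a\rangle|b\rangle|c\rangle$. Such a set $S$ is called a three-qubit unextendible entangled basis that is unextendible across every bipartition. *)

theory Defs
  imports Complex_Main
begin

text \<open>Three-qubit state vectors in C^2 (x) C^2 (x) C^2, as amplitude functions
  indexed by the computational basis (qubit values False/True for A, B, C).\<close>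
type_synonym qstate = "bool \<Rightarrow> bool \<Rightarrow> bool \<Rightarrow> complex"

definition hinner :: "qstate \<Rightarrow> qstate \<Rightarrow> complex" where
  "hinner u v = (\<Sum>i\<in>UNIV. \<Sum>j\<in>UNIV. \<Sum>k\<in>UNIV. cnj (u i j k) * v i j k)"

definition pure_state :: "qstate \<Rightarrow> bool" where
  "pure_state v \<longleftrightarrow> hinner v v = 1"

definition cspan :: "qstate set \<Rightarrow> qstate set" where
  "cspan S = {v. \<exists>T c. finite T \<and> T \<subseteq> S \<and>
                    v = (\<lambda>i j k. \<Sum>s\<in>T. c s * s i j k)}"

definition orth_compl :: "qstate set \<Rightarrow> qstate set" where
  "orth_compl W = {v. \<forall>w\<in>W. hinner w v = 0}"

datatype bipartition = A_BC | B_AC | C_AB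

fun product_wrt :: "bipartition \<Rightarrow> qstate \<Rightarrow> bool" where
  "product_wrt A_BC v = (\<exists>(a::bool \<Rightarrow> complex) b. \<forall>i j k. v i j k = a i * b j k)"
| "product_wrt B_AC v = (\<exists>(a::bool \<Rightarrow> complex) b. \<forall>i j k. v i j k = a j * b i k)"
| "product_wrt C_AB v = (\<exists>(a::bool \<Rightarrow> complex) b. \<forall>i j k. v i j k = a k * b i j)"

definition genuinely_entangled :: "qstate \<Rightarrow> bool" where
  "genuinely_entangled v \<longleftrightarrow> pure_state v \<and> (\<forall>p. \<not> product_wrt p v)"

definition UEB_every_bipartition :: "qstate set \<Rightarrow> bool" where
  "UEB_every_bipartition S \<longleftrightarrow>
     (\<forall>s\<in>S. genuinely_entangled s) \<and>
     (\<forall>s\<in>S. \<forall>t\<in>S. s \<noteq> t \<longrightarrow> hinner s t = 0) \<and>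
     cspan S \<noteq> UNIV \<and>
     (\<forall>p. \<forall>v\<in>orth_compl (cspan S). pure_state v \<longrightarrow> product_wrt p v)"

end

theory Submission
  imports Defs
begin


lemma hinner_expand: "hinner u v =
  cnj (u False False False) * v False False False + cnj (u False False True) * v False False True +
  cnj (u False True False) * v False True False + cnj (u False True True) * v False True True +
  cnj (u True False False) * v True False False + cnj (u True False True) * v True False True +
  cnj (u True True False) * v True True False + cnj (u True True True) * v True True True"
  by (simp add: hinner_def UNIV_bool algebra_simps)

lemma hinner_sum_right: "hinner u (\<lambda>i j k. \<Sum>s\<in>T. f s * g s i j k) = (\<Sum>s\<in>T. f s * hinner u (g s))"
  by (simp add: hinner_expand sum_distrib_left sum.distrib algebra_simps)

lemma hinner_sum_left: "hinner (\<lambda>i j k. \<Sum>s\<in>T. f s * g s i j k) v = (\<Sum>s\<in>T. cnj (f s) * hinner (g s) v)"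
  by (simp add: hinner_expand sum_distrib_left sum_distrib_right sum.distrib algebra_simps)

lemma hinner_conj: "hinner v u = cnj (hinner u v)"
  by (simp add: hinner_expand algebra_simps)

lemma hinner_lin3: "hinner w (\<lambda>i j k. a * x i j k + b * y i j k + c * z i j k) = a * hinner w x + b * hinner w y + c * hinner w z"
  by (simp add: hinner_expand algebra_simps)

lemma hinner_scale_right: "hinner w (\<lambda>i j k. c * x i j k) = c * hinner w x"
  by (simp add: hinner_expand algebra_simps)

lemma hinner_scale_left: "hinner (\<lambda>i j k. c * x i j k) w = cnj c * hinner x w"
  by (simp add: hinner_expand algebra_simps)

lemma hinner_diff_right: "hinner w (\<lambda>i j k. x i j k - y i j k) = hinner w x - hinner w y"
  by (simp add: hinner_expand algebra_simps)

lemma hinner_diff_left: "hinner (\<lambda>i j k. x i j k - y i j k) w = hinner x w - hinner y w"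
  by (simp add: hinner_expand algebra_simps)

definition nsq :: "qstate \<Rightarrow> real" where
  "nsq v = (\<Sum>i\<in>UNIV. \<Sum>j\<in>UNIV. \<Sum>k\<in>UNIV. (cmod (v i j k))^2)"

lemma hinner_self: "hinner v v = of_real (nsq v)"
proof -
  have e: "\<And>z. cnj z * z = of_real ((cmod z)^2)" by (metis complex_norm_square mult.commute)
  show ?thesis by (simp add: hinner_def nsq_def e)
qed

lemma nsq_nonneg: "nsq v \<ge> 0"
  unfolding nsq_def by (intro sum_nonneg) auto

lemma nsq_zero: "nsq v = 0 \<Longrightarrow> v i j k = 0"
  unfolding nsq_def by (cases i; cases j; cases k) (simp_all add: UNIV_bool add_nonneg_eq_0_iff)

definition orthonormal :: "qstate set \<Rightarrow> bool" where
  "orthonormal T \<longleftrightarrow> (\<forall>s\<in>T. hinner s s = 1) \<and> (\<forall>s\<in>T. \<forall>t\<in>T. s \<noteq> t \<longrightarrow> hinner s t = 0)"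

definition delta :: "bool \<Rightarrow> bool \<Rightarrow> bool \<Rightarrow> qstate" where
  "delta a b c = (\<lambda>i j k. if i = a \<and> j = b \<and> k = c then 1 else 0)"

definition proj :: "qstate set \<Rightarrow> qstate \<Rightarrow> qstate" where
  "proj T v = (\<lambda>i j k. \<Sum>s\<in>T. hinner s v * s i j k)"

definition res :: "qstate set \<Rightarrow> qstate \<Rightarrow> qstate" where
  "res T v = (\<lambda>i j k. v i j k - proj T v i j k)"

lemma delta_same: "delta a b c a b c = 1" by (simp add: delta_def)

lemma hinner_delta_left: "hinner (delta a b c) v = v a b c"
  by (cases a; cases b; cases c) (simp_all add: hinner_expand delta_def)

lemma hinner_delta_right: "hinner v (delta a b c) = cnj (v a b c)"
  by (cases a; cases b; cases c) (simp_all add: hinner_expand delta_def)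

lemma hinner_proj:
  assumes "orthonormal T" "finite T" "s \<in> T"
  shows "hinner s (proj T v) = hinner s v"
proof -
  have "hinner s (proj T v) = (\<Sum>t\<in>T. hinner t v * hinner s t)"
    unfolding proj_def by (rule hinner_sum_right)
  also have "\<dots> = hinner s v * hinner s s + (\<Sum>t\<in>T - {s}. hinner t v * hinner s t)"
    using assms by (simp add: sum.remove)
  also have "(\<Sum>t\<in>T - {s}. hinner t v * hinner s t) = 0"
    using assms unfolding orthonormal_def by (intro sum.neutral) auto
  finally show ?thesis using assms unfolding orthonormal_def by simp
qed

lemma hinner_res:
  assumes "orthonormal T" "finite T" "s \<in> T"
  shows "hinner s (res T v) = 0"
  unfolding res_def using hinner_proj[OF assms] by (simp add: hinner_diff_right)

lemma hinner_res_self: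
  assumes "orthonormal T" "finite T"
  shows "hinner (res T v) (res T v) = hinner v v - (\<Sum>t\<in>T. hinner t v * cnj (hinner t v))"
proof -
  have pr: "hinner (proj T v) (res T v) = 0"
    unfolding proj_def hinner_sum_left using hinner_res[OF assms] by simp
  have "hinner (res T v) (res T v) = hinner v (res T v) - hinner (proj T v) (res T v)"
    unfolding res_def[of T v] by (rule hinner_diff_left)
  also have "\<dots> = hinner v (res T v)" using pr by simp
  also have "\<dots> = hinner v v - hinner v (proj T v)"
    unfolding res_def by (rule hinner_diff_right)
  also have "hinner v (proj T v) = (\<Sum>t\<in>T. hinner t v * hinner v t)"
    unfolding proj_def by (rule hinner_sum_right)
  also have "\<dots> = (\<Sum>t\<in>T. hinner t v * cnj (hinner t v))"
    by (simp add: hinner_conj[of v])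
  finally show ?thesis .
qed

lemma res_delta_self:
  assumes "orthonormal T" "finite T"
  shows "hinner (res T (delta a b c)) (res T (delta a b c)) = 1 - (\<Sum>t\<in>T. cnj (t a b c) * t a b c)"
  using hinner_res_self[OF assms, of "delta a b c"]
  by (simp add: hinner_delta_left hinner_delta_right mult.commute delta_same)

lemma trace_res:
  assumes "orthonormal T" "finite T"
  shows "(\<Sum>a\<in>UNIV. \<Sum>b\<in>UNIV. \<Sum>c\<in>UNIV. hinner (res T (delta a b c)) (res T (delta a b c)))
          = 8 - of_nat (card T)"
proof -
  have "(\<Sum>t\<in>T. hinner t t) = of_nat (card T)"
    using assms unfolding orthonormal_def by simp
  moreover have "(\<Sum>a\<in>UNIV. \<Sum>b\<in>UNIV. \<Sum>c\<in>UNIV. 1 - (\<Sum>t\<in>T. cnj (t a b c) * t a b c)) = 8 - (\<Sum>t\<in>T. hinner t t)"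
    by (simp add: UNIV_bool hinner_expand sum.distrib algebra_simps)
  ultimately show ?thesis
    unfolding res_delta_self[OF assms] by simp
qed

lemma trace_res_real:
  assumes "orthonormal T" "finite T"
  shows "(\<Sum>a\<in>UNIV. \<Sum>b\<in>UNIV. \<Sum>c\<in>UNIV. nsq (res T (delta a b c))) = 8 - real (card T)"
proof -
  have "complex_of_real (\<Sum>a\<in>UNIV. \<Sum>b\<in>UNIV. \<Sum>c\<in>UNIV. nsq (res T (delta a b c))) = 8 - of_nat (card T)"
    using trace_res[OF assms] by (simp add: hinner_self)
  then have "complex_of_real (\<Sum>a\<in>UNIV. \<Sum>b\<in>UNIV. \<Sum>c\<in>UNIV. nsq (res T (delta a b c))) = complex_of_real (8 - real (card T))"
    by simp
  then show ?thesis using of_real_eq_iff by blast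
qed

lemma card_le8:
  assumes "orthonormal T" "finite T"
  shows "card T \<le> 8"
proof -
  have "0 \<le> (\<Sum>a\<in>UNIV. \<Sum>b\<in>UNIV. \<Sum>c\<in>UNIV. nsq (res T (delta a b c)))"
    by (intro sum_nonneg) (simp add: nsq_nonneg)
  then show ?thesis using trace_res_real[OF assms] by simp
qed

definition normalize :: "qstate \<Rightarrow> qstate" where
  "normalize w = (\<lambda>i j k. (1 / complex_of_real (sqrt (nsq w))) * w i j k)"

lemma normalize_unit:
  assumes "nsq w \<noteq> 0"
  shows "hinner (normalize w) (normalize w) = 1"
proof -
  have pos: "nsq w > 0" using assms nsq_nonneg[of w] by simp
  have "hinner (normalize w) (normalize w) = cnj (1 / complex_of_real (sqrt (nsq w))) * ((1 / complex_of_real (sqrt (nsq w))) * hinner w w)"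
    unfolding normalize_def hinner_scale_left hinner_scale_right ..
  also have "\<dots> = complex_of_real (1 / sqrt (nsq w)) * (complex_of_real (1 / sqrt (nsq w)) * complex_of_real (nsq w))"
    by (simp add: hinner_self)
  also have "\<dots> = complex_of_real ((1 / sqrt (nsq w)) * (1 / sqrt (nsq w)) * nsq w)"
    by (simp only: of_real_mult mult.assoc)
  also have "(1 / sqrt (nsq w)) * (1 / sqrt (nsq w)) * nsq w = 1"
    using pos by (simp add: field_simps)
  finally show ?thesis by simp
qed

lemma normalize_orth: "hinner s w = 0 \<Longrightarrow> hinner s (normalize w) = 0"
  unfolding normalize_def hinner_scale_right by simp

lemma exists_orth:
  assumes "orthonormal T" "finite T" "card T < 8"
  shows "\<exists>u. hinner u u = 1 \<and> (\<forall>s\<in>T. hinner s u = 0)"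
proof (rule ccontr)
  assume nex: "\<not> ?thesis"
  have z: "nsq (res T (delta a b c)) = 0" for a b c
  proof (rule ccontr)
    assume nz: "nsq (res T (delta a b c)) \<noteq> 0"
    have 1: "hinner (normalize (res T (delta a b c))) (normalize (res T (delta a b c))) = 1"
      using normalize_unit[OF nz] .
    have 2: "\<forall>s\<in>T. hinner s (normalize (res T (delta a b c))) = 0"
      using normalize_orth hinner_res[OF assms(1,2)] by simp
    have "\<not> (hinner (normalize (res T (delta a b c))) (normalize (res T (delta a b c))) = 1
       \<and> (\<forall>s\<in>T. hinner s (normalize (res T (delta a b c))) = 0))"
      using nex by (rule contrapos_nn) (rule exI)
    then show False using 1 2 by simp
  qed
  show False using trace_res_real[OF assms(1,2)] assms(3) by (simp add: z)
qed

lemma sum_hinner_swap: "(\<Sum>t\<in>T. hinner t v * t i j k) = (\<Sum>a\<in>UNIV. \<Sum>b\<in>UNIV. \<Sum>c\<in>UNIV. v a b c * (\<Sum>t\<in>T. cnj (t a b c) * t i j k))"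
proof -
  have "(\<Sum>t\<in>T. hinner t v * t i j k) = (\<Sum>t\<in>T. \<Sum>a\<in>UNIV. \<Sum>b\<in>UNIV. \<Sum>c\<in>UNIV. v a b c * (cnj (t a b c) * t i j k))"
    unfolding hinner_def sum_distrib_right by (simp add: mult_ac)
  also have "\<dots> = (\<Sum>a\<in>UNIV. \<Sum>t\<in>T. \<Sum>b\<in>UNIV. \<Sum>c\<in>UNIV. v a b c * (cnj (t a b c) * t i j k))"
    by (rule sum.swap)
  also have "\<dots> = (\<Sum>a\<in>UNIV. \<Sum>b\<in>UNIV. \<Sum>t\<in>T. \<Sum>c\<in>UNIV. v a b c * (cnj (t a b c) * t i j k))"
    by (rule sum.cong[OF refl], rule sum.swap)
  also have "\<dots> = (\<Sum>a\<in>UNIV. \<Sum>b\<in>UNIV. \<Sum>c\<in>UNIV. \<Sum>t\<in>T. v a b c * (cnj (t a b c) * t i j k))"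
    by (rule sum.cong[OF refl], rule sum.cong[OF refl], rule sum.swap)
  also have "\<dots> = (\<Sum>a\<in>UNIV. \<Sum>b\<in>UNIV. \<Sum>c\<in>UNIV. v a b c * (\<Sum>t\<in>T. cnj (t a b c) * t i j k))"
    by (simp add: sum_distrib_left)
  finally show ?thesis .
qed

lemma full_span:
  assumes "orthonormal T" "finite T" "card T = 8"
  shows "v i j k = (\<Sum>t\<in>T. hinner t v * t i j k)"
proof -
  have s0: "(\<Sum>a\<in>UNIV. \<Sum>b\<in>UNIV. \<Sum>c\<in>UNIV. nsq (res T (delta a b c))) = 0"
    using trace_res_real[OF assms(1,2)] assms(3) by simp
  have z: "nsq (res T (delta a b c)) = 0" for a b c
  proof -
    have nn: "\<And>a b. 0 \<le> (\<Sum>c\<in>UNIV. nsq (res T (delta a b c)))" "\<And>a. 0 \<le> (\<Sum>b\<in>UNIV. \<Sum>c\<in>UNIV. nsq (res T (delta a b c)))"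
      by (auto intro!: sum_nonneg simp: nsq_nonneg)
    have "(\<Sum>b\<in>UNIV. \<Sum>c\<in>UNIV. nsq (res T (delta a b c))) = 0"
      using s0 nn(2) by (simp add: sum_nonneg_eq_0_iff)
    then have "(\<Sum>c\<in>UNIV. nsq (res T (delta a b c))) = 0"
      using nn(1) by (simp add: sum_nonneg_eq_0_iff)
    then show ?thesis using nsq_nonneg by (simp add: sum_nonneg_eq_0_iff)
  qed
  have d: "(\<Sum>t\<in>T. cnj (t a b c) * t i j k) = delta a b c i j k" for a b c i j k
  proof -
    have "res T (delta a b c) i j k = 0" using nsq_zero[OF z] .
    then show ?thesis unfolding res_def proj_def by (simp add: hinner_delta_right)
  qed
  have "(\<Sum>t\<in>T. hinner t v * t i j k) = (\<Sum>a\<in>UNIV. \<Sum>b\<in>UNIV. \<Sum>c\<in>UNIV. v a b c * (\<Sum>t\<in>T. cnj (t a b c) * t i j k))"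
    by (rule sum_hinner_swap)
  also have "\<dots> = v i j k"
    unfolding d by (cases i; cases j; cases k) (simp_all add: UNIV_bool delta_def)
  finally show ?thesis by simp
qed

lemma full_cspan:
  assumes "orthonormal T" "finite T" "card T = 8"
  shows "cspan T = UNIV"
proof -
  have "v \<in> cspan T" for v
  proof -
    have e: "v = (\<lambda>i j k. \<Sum>s\<in>T. hinner s v * s i j k)"
      by (rule ext)+ (rule full_span[OF assms])
    show ?thesis unfolding cspan_def
      by (rule CollectI, rule exI[of _ T], rule exI[of _ "\<lambda>s. hinner s v"]) (use e assms(2) in simp)
  qed
  then show ?thesis by auto
qed




definition rank1 :: "(bool \<Rightarrow> 'm \<Rightarrow> complex) \<Rightarrow> bool" where
  "rank1 G \<longleftrightarrow> (\<exists>a B. \<forall>i m. G i m = a i * B m)"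

definition indep3 :: "(bool \<Rightarrow> 'm \<Rightarrow> complex) \<Rightarrow> (bool \<Rightarrow> 'm \<Rightarrow> complex) \<Rightarrow> (bool \<Rightarrow> 'm \<Rightarrow> complex) \<Rightarrow> bool" where
  "indep3 X Y Z \<longleftrightarrow> (\<forall>\<alpha> \<beta> \<gamma>. (\<forall>i m. \<alpha> * X i m + \<beta> * Y i m + \<gamma> * Z i m = 0) \<longrightarrow> \<alpha> = 0 \<and> \<beta> = 0 \<and> \<gamma> = 0)"

definition det2 :: "(bool \<Rightarrow> complex) \<Rightarrow> (bool \<Rightarrow> complex) \<Rightarrow> complex" where
  "det2 a b = a False * b True - a True * b False"

lemma lemK:
  assumes U: "\<forall>i m. U i m = a i * B m" and V: "\<forall>i m. V i m = a' i * B' m"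
    and S: "\<forall>i m. U i m + V i m = e i * F m" and d: "det2 a a' \<noteq> 0"
  shows "B m * B' m' = B m' * B' m"
proof -
  have eq: "a i * B n + a' i * B' n = e i * F n" for i n using U V S by metis
  have hB: "B n * det2 a a' = (e False * a' True - e True * a' False) * F n" for n
  proof -
    have "a' True * (a False * B n + a' False * B' n) - a' False * (a True * B n + a' True * B' n)
        = a' True * (e False * F n) - a' False * (e True * F n)" by (simp add: eq)
    then show ?thesis unfolding det2_def by (simp add: algebra_simps)
  qed
  have hB': "B' n * det2 a a' = (a False * e True - a True * e False) * F n" for n
  proof -
    have "a False * (a True * B n + a' True * B' n) - a True * (a False * B n + a' False * B' n)
        = a False * (e True * F n) - a True * (e False * F n)" by (simp add: eq)
    then show ?thesis unfolding det2_def by (simp add: algebra_simps)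
  qed
  have "(B m * B' m') * (det2 a a' * det2 a a') = (B m' * B' m) * (det2 a a' * det2 a a')"
  proof -
    have "(B m * B' m') * (det2 a a' * det2 a a') = (B m * det2 a a') * (B' m' * det2 a a')" by (simp add: mult_ac)
    also have "\<dots> = (B m' * det2 a a') * (B' m * det2 a a')" unfolding hB hB' by (simp add: mult_ac)
    also have "\<dots> = (B m' * B' m) * (det2 a a' * det2 a a')" by (simp add: mult_ac)
    finally show ?thesis .
  qed
  then show ?thesis using d by simp
qed

lemma par_scalar:
  fixes a b :: "bool \<Rightarrow> complex"
  assumes "a i0 \<noteq> 0" "det2 a b = 0"
  shows "\<exists>t. \<forall>i. b i = t * a i"
proof (intro exI allI)
  fix i
  show "b i = b i0 / a i0 * a i"
    using assms unfolding det2_def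
    by (cases i0; cases i) (auto simp: field_simps mult.commute)
qed

lemma parB:
  fixes B B' :: "'m \<Rightarrow> complex"
  assumes "B m0 \<noteq> 0" "\<forall>m m'. B m * B' m' = B m' * B' m"
  shows "\<exists>s. \<forall>m. B' m = s * B m"
proof (intro exI allI)
  fix m
  have "B m0 * B' m = B m * B' m0" using assms(2) by metis
  then show "B' m = B' m0 / B m0 * B m" using assms(1) by (simp add: field_simps mult.commute)
qed

lemma indep3D:
  assumes "indep3 X Y Z" "\<forall>i m. \<alpha> * X i m + \<beta> * Y i m + \<gamma> * Z i m = 0"
  shows "\<alpha> = 0 \<and> \<beta> = 0 \<and> \<gamma> = 0"
  using assms unfolding indep3_def by blast

lemma nonzero_of_indep:
  assumes "indep3 X Y Z"
  shows "\<exists>i m. X i m \<noteq> 0" "\<exists>i m. Y i m \<noteq> 0" "\<exists>i m. Z i m \<noteq> 0"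
proof -
  show "\<exists>i m. X i m \<noteq> 0"
  proof (rule ccontr)
    assume "\<not> ?thesis"
    then have h: "\<forall>i m. 1 * X i m + 0 * Y i m + 0 * Z i m = 0" by simp
    show False using indep3D[OF assms h] by simp
  qed
  show "\<exists>i m. Y i m \<noteq> 0"
  proof (rule ccontr)
    assume "\<not> ?thesis"
    then have h: "\<forall>i m. 0 * X i m + 1 * Y i m + 0 * Z i m = 0" by simp
    show False using indep3D[OF assms h] by simp
  qed
  show "\<exists>i m. Z i m \<noteq> 0"
  proof (rule ccontr)
    assume "\<not> ?thesis"
    then have h: "\<forall>i m. 0 * X i m + 0 * Y i m + 1 * Z i m = 0" by simp
    show False using indep3D[OF assms h] by simp
  qed
qed

lemma Qcore:
  assumes X: "\<forall>i m. X i m = a1 i * B1 m" and Y: "\<forall>i m. Y i m = a2 i * B2 m"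
    and Z: "\<forall>i m. Z i m = a3 i * B3 m"
    and XY: "rank1 (\<lambda>i m. X i m + Y i m)" and XZ: "rank1 (\<lambda>i m. X i m + Z i m)"
    and YZ: "rank1 (\<lambda>i m. Y i m + Z i m)"
    and ind: "indep3 X Y Z" and d12: "det2 a1 a2 \<noteq> 0"
  shows False
proof -
  obtain i0 m0 where "X i0 m0 \<noteq> 0" using nonzero_of_indep(1)[OF ind] by blast
  then have B1nz: "B1 m0 \<noteq> 0" using X by auto
  obtain iy my where "Y iy my \<noteq> 0" using nonzero_of_indep(2)[OF ind] by blast
  then have B2nz: "B2 my \<noteq> 0" using Y by auto
  obtain iz mz where "Z iz mz \<noteq> 0" using nonzero_of_indep(3)[OF ind] by blast
  then have a3nz: "a3 iz \<noteq> 0" using Z by auto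
  obtain e F where eF: "\<forall>i m. X i m + Y i m = e i * F m" using XY unfolding rank1_def by blast
  have "\<forall>m m'. B1 m * B2 m' = B1 m' * B2 m" using lemK[OF X Y eF d12] by blast
  then obtain s where s: "\<forall>m. B2 m = s * B1 m" using parB[of B1 m0 B2] B1nz by blast
  have snz: "s \<noteq> 0" using B2nz s by auto
  show False
  proof (cases "\<exists>s3. \<forall>m. B3 m = s3 * B1 m")
    case True
    then obtain s3 where s3: "\<forall>m. B3 m = s3 * B1 m" by blast
    define \<alpha> where "\<alpha> = s3 * det2 a3 a2 / det2 a1 a2"
    define \<beta> where "\<beta> = s3 * det2 a1 a3 / (det2 a1 a2 * s)"
    have "\<forall>i m. \<alpha> * X i m + \<beta> * Y i m + (-1) * Z i m = 0"
    proof (intro allI)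
      fix i m
      have cr: "det2 a3 a2 * a1 i + det2 a1 a3 * a2 i = det2 a1 a2 * a3 i"
        by (cases i) (simp_all add: det2_def algebra_simps)
      have "\<alpha> * X i m + \<beta> * Y i m = s3 * B1 m * (det2 a3 a2 * a1 i + det2 a1 a3 * a2 i) / det2 a1 a2"
        using X Y s snz d12 unfolding \<alpha>_def \<beta>_def by (simp add: field_simps)
      also have "\<dots> = Z i m" unfolding cr using Z s3 d12 by simp
      finally show "\<alpha> * X i m + \<beta> * Y i m + (-1) * Z i m = 0" by simp
    qed
    then have h: "\<forall>i m. \<alpha> * X i m + \<beta> * Y i m + (-1) * Z i m = 0" .
    show False using indep3D[OF ind h] by simp
  next
    case False
    have d13: "det2 a1 a3 = 0"
    proof (rule ccontr)
      assume h: "det2 a1 a3 \<noteq> 0"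
      obtain e F where eF: "\<forall>i m. X i m + Z i m = e i * F m" using XZ unfolding rank1_def by blast
      have "\<forall>m m'. B1 m * B3 m' = B1 m' * B3 m" using lemK[OF X Z eF h] by blast
      then show False using parB[of B1 m0 B3] B1nz False by blast
    qed
    have d23: "det2 a2 a3 = 0"
    proof (rule ccontr)
      assume h: "det2 a2 a3 \<noteq> 0"
      obtain e F where eF: "\<forall>i m. Y i m + Z i m = e i * F m" using YZ unfolding rank1_def by blast
      have "\<forall>m m'. B2 m * B3 m' = B2 m' * B3 m" using lemK[OF Y Z eF h] by blast
      then obtain s' where s': "\<forall>m. B3 m = s' * B2 m" using parB[of B2 my B3] B2nz by blast
      have "\<forall>m. B3 m = (s' * s) * B1 m" using s s' by simp
      then show False using False by blast
    qed
    have "det2 a3 a1 = 0" using d13 unfolding det2_def by (simp add: algebra_simps)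
    then obtain t where t: "\<forall>i. a1 i = t * a3 i" using par_scalar[of a3 iz] a3nz by blast
    have "det2 a3 a2 = 0" using d23 unfolding det2_def by (simp add: algebra_simps)
    then obtain t' where t': "\<forall>i. a2 i = t' * a3 i" using par_scalar[of a3 iz] a3nz by blast
    have "det2 a1 a2 = 0" unfolding det2_def using t t' by (simp add: algebra_simps)
    then show False using d12 by simp
  qed
qed

lemma indep3_swap: "indep3 X Y Z \<Longrightarrow> indep3 X Z Y"
  unfolding indep3_def by (metis add.assoc add.commute)

lemma lemQ:
  assumes rX: "rank1 X" and rY: "rank1 Y" and rZ: "rank1 Z"
    and XY: "rank1 (\<lambda>i m. X i m + Y i m)" and XZ: "rank1 (\<lambda>i m. X i m + Z i m)"
    and YZ: "rank1 (\<lambda>i m. Y i m + Z i m)" and ind: "indep3 X Y Z"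
  shows "\<exists>a. (\<exists>B. \<forall>i m. X i m = a i * B m) \<and> (\<exists>B. \<forall>i m. Y i m = a i * B m) \<and> (\<exists>B. \<forall>i m. Z i m = a i * B m)"
proof -
  obtain a1 B1 where X: "\<forall>i m. X i m = a1 i * B1 m" using rX unfolding rank1_def by blast
  obtain a2 B2 where Y: "\<forall>i m. Y i m = a2 i * B2 m" using rY unfolding rank1_def by blast
  obtain a3 B3 where Z: "\<forall>i m. Z i m = a3 i * B3 m" using rZ unfolding rank1_def by blast
  have d12: "det2 a1 a2 = 0"
    using Qcore[OF X Y Z XY XZ YZ ind] by blast
  have ZY: "rank1 (\<lambda>i m. Z i m + Y i m)" using YZ by (simp add: add.commute)
  have d13: "det2 a1 a3 = 0"
    using Qcore[OF X Z Y XZ XY ZY indep3_swap[OF ind]] by blast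
  obtain i0 m0 where "X i0 m0 \<noteq> 0" using nonzero_of_indep(1)[OF ind] by blast
  then have a1nz: "a1 i0 \<noteq> 0" using X by auto
  obtain t where t: "\<forall>i. a2 i = t * a1 i" using par_scalar[of a1 i0 a2] a1nz d12 by blast
  obtain t' where t': "\<forall>i. a3 i = t' * a1 i" using par_scalar[of a1 i0 a3] a1nz d13 by blast
  have hY: "\<forall>i m. Y i m = a1 i * (t * B2 m)" using Y t by simp
  have hZ: "\<forall>i m. Z i m = a1 i * (t' * B3 m)" using Z t' by simp
  show ?thesis
    apply (rule exI[of _ a1], intro conjI)
      apply (rule exI[of _ B1], rule X)
     apply (rule exI[of _ "\<lambda>m. t * B2 m"], rule hY)
    apply (rule exI[of _ "\<lambda>m. t' * B3 m"], rule hZ)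
    done
qed




definition MA :: "qstate \<Rightarrow> bool \<Rightarrow> bool \<times> bool \<Rightarrow> complex" where
  "MA v = (\<lambda>i m. v i (fst m) (snd m))"
definition MB :: "qstate \<Rightarrow> bool \<Rightarrow> bool \<times> bool \<Rightarrow> complex" where
  "MB v = (\<lambda>j m. v (fst m) j (snd m))"
definition MC :: "qstate \<Rightarrow> bool \<Rightarrow> bool \<times> bool \<Rightarrow> complex" where
  "MC v = (\<lambda>k m. v (fst m) (snd m) k)"

lemma prodA: "product_wrt A_BC v \<Longrightarrow> rank1 (MA v)"
proof -
  assume "product_wrt A_BC v"
  then obtain a b where h: "\<forall>i j k. v i j k = a i * b j k" by auto
  show ?thesis unfolding rank1_def MA_def
    by (rule exI[of _ a], rule exI[of _ "\<lambda>m. b (fst m) (snd m)"]) (simp add: h)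
qed

lemma prodB: "product_wrt B_AC v \<Longrightarrow> rank1 (MB v)"
proof -
  assume "product_wrt B_AC v"
  then obtain a b where h: "\<forall>i j k. v i j k = a j * b i k" by auto
  show ?thesis unfolding rank1_def MB_def
    by (rule exI[of _ a], rule exI[of _ "\<lambda>m. b (fst m) (snd m)"]) (simp add: h)
qed

lemma prodC: "product_wrt C_AB v \<Longrightarrow> rank1 (MC v)"
proof -
  assume "product_wrt C_AB v"
  then obtain a b where h: "\<forall>i j k. v i j k = a k * b i j" by auto
  show ?thesis unfolding rank1_def MC_def
    by (rule exI[of _ a], rule exI[of _ "\<lambda>m. b (fst m) (snd m)"]) (simp add: h)
qed

lemma MA_lin: "MA (\<lambda>i j k. \<alpha> * x i j k + \<beta> * y i j k + \<gamma> * z i j k) = (\<lambda>i m. \<alpha> * MA x i m + \<beta> * MA y i m + \<gamma> * MA z i m)"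
  by (simp add: MA_def)
lemma MB_lin: "MB (\<lambda>i j k. \<alpha> * x i j k + \<beta> * y i j k + \<gamma> * z i j k) = (\<lambda>i m. \<alpha> * MB x i m + \<beta> * MB y i m + \<gamma> * MB z i m)"
  by (simp add: MB_def)
lemma MC_lin: "MC (\<lambda>i j k. \<alpha> * x i j k + \<beta> * y i j k + \<gamma> * z i j k) = (\<lambda>i m. \<alpha> * MC x i m + \<beta> * MC y i m + \<gamma> * MC z i m)"
  by (simp add: MC_def)
lemma MA_inj: "(\<forall>i m. MA v i m = 0) \<Longrightarrow> (\<forall>i j k. v i j k = 0)"
proof (intro allI)
  fix i j k assume "\<forall>i m. MA v i m = 0"
  then have "MA v i (j, k) = 0" by blast
  then show "v i j k = 0" by (simp add: MA_def)
qed
lemma MB_inj: "(\<forall>i m. MB v i m = 0) \<Longrightarrow> (\<forall>i j k. v i j k = 0)"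
proof (intro allI)
  fix i j k assume "\<forall>i m. MB v i m = 0"
  then have "MB v j (i, k) = 0" by blast
  then show "v i j k = 0" by (simp add: MB_def)
qed
lemma MC_inj: "(\<forall>i m. MC v i m = 0) \<Longrightarrow> (\<forall>i j k. v i j k = 0)"
proof (intro allI)
  fix i j k assume "\<forall>i m. MC v i m = 0"
  then have "MC v k (i, j) = 0" by blast
  then show "v i j k = 0" by (simp add: MC_def)
qed

definition indep3q :: "qstate \<Rightarrow> qstate \<Rightarrow> qstate \<Rightarrow> bool" where
  "indep3q x y z \<longleftrightarrow> (\<forall>\<alpha> \<beta> \<gamma>. (\<forall>i j k. \<alpha> * x i j k + \<beta> * y i j k + \<gamma> * z i j k = 0) \<longrightarrow> \<alpha> = 0 \<and> \<beta> = 0 \<and> \<gamma> = 0)"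

lemma viewQ:
  fixes M :: "qstate \<Rightarrow> bool \<Rightarrow> 'm \<Rightarrow> complex"
  assumes Mprod: "\<And>v. product_wrt p v \<Longrightarrow> rank1 (M v)"
    and Mlin: "\<And>x y z \<alpha> \<beta> \<gamma>. M (\<lambda>i j k. \<alpha> * x i j k + \<beta> * y i j k + \<gamma> * z i j k) = (\<lambda>i m. \<alpha> * M x i m + \<beta> * M y i m + \<gamma> * M z i m)"
    and Minj: "\<And>v. (\<forall>i m. M v i m = 0) \<Longrightarrow> (\<forall>i j k. v i j k = 0)"
    and prod: "\<And>\<alpha> \<beta> \<gamma>. product_wrt p (\<lambda>i j k. \<alpha> * u1 i j k + \<beta> * u2 i j k + \<gamma> * u3 i j k)"
    and ind: "indep3q u1 u2 u3"
  shows "\<exists>a. (\<exists>B. \<forall>i m. M u1 i m = a i * B m) \<and> (\<exists>B. \<forall>i m. M u2 i m = a i * B m) \<and> (\<exists>B. \<forall>i m. M u3 i m = a i * B m)"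
proof -
  have r: "rank1 (\<lambda>i m. \<alpha> * M u1 i m + \<beta> * M u2 i m + \<gamma> * M u3 i m)" for \<alpha> \<beta> \<gamma>
    using Mprod[OF prod[of \<alpha> \<beta> \<gamma>]] unfolding Mlin .
  have r1: "rank1 (M u1)" using r[of 1 0 0] by simp
  have r2: "rank1 (M u2)" using r[of 0 1 0] by simp
  have r3: "rank1 (M u3)" using r[of 0 0 1] by simp
  have r12: "rank1 (\<lambda>i m. M u1 i m + M u2 i m)" using r[of 1 1 0] by simp
  have r13: "rank1 (\<lambda>i m. M u1 i m + M u3 i m)" using r[of 1 0 1] by simp
  have r23: "rank1 (\<lambda>i m. M u2 i m + M u3 i m)" using r[of 0 1 1] by simp
  have "indep3 (M u1) (M u2) (M u3)"
    unfolding indep3_def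
  proof (intro allI impI)
    fix \<alpha> \<beta> \<gamma>
    assume h: "\<forall>i m. \<alpha> * M u1 i m + \<beta> * M u2 i m + \<gamma> * M u3 i m = 0"
    have "\<forall>i m. M (\<lambda>i j k. \<alpha> * u1 i j k + \<beta> * u2 i j k + \<gamma> * u3 i j k) i m = 0"
      unfolding Mlin using h by simp
    then have "\<forall>i j k. \<alpha> * u1 i j k + \<beta> * u2 i j k + \<gamma> * u3 i j k = 0" using Minj by blast
    then show "\<alpha> = 0 \<and> \<beta> = 0 \<and> \<gamma> = 0" using ind unfolding indep3q_def by blast
  qed
  then show ?thesis using lemQ[OF r1 r2 r3 r12 r13 r23] by blast
qed

lemma sep_form:
  fixes w :: qstate and a b c :: "bool \<Rightarrow> complex"
  assumes A: "\<forall>i j k. w i j k = a i * B j k" and Bf: "\<forall>i j k. w i j k = b j * C i k"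
    and Cf: "\<forall>i j k. w i j k = c k * D i j"
    and nz: "a i0 \<noteq> 0" "b j0 \<noteq> 0" "c k0 \<noteq> 0"
  shows "w i j k = (a i * b j * c k / (a i0 * b j0 * c k0)) * w i0 j0 k0"
proof -
  have 1: "w i j k = a i / a i0 * w i0 j k" using A nz by (simp add: field_simps)
  have 2: "w i0 j k = b j / b j0 * w i0 j0 k" using Bf nz by (simp add: field_simps)
  have 3: "w i0 j0 k = c k / c k0 * w i0 j0 k0" using Cf nz by (simp add: field_simps)
  show ?thesis unfolding 1 2 3 by (simp add: mult.assoc)
qed

lemma no_three:
  assumes n1: "hinner u1 u1 = 1" and n2: "hinner u2 u2 = 1" and n3: "hinner u3 u3 = 1"
    and o12: "hinner u1 u2 = 0" and o13: "hinner u1 u3 = 0" and o23: "hinner u2 u3 = 0"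
    and prod: "\<And>p \<alpha> \<beta> \<gamma>. product_wrt p (\<lambda>i j k. \<alpha> * u1 i j k + \<beta> * u2 i j k + \<gamma> * u3 i j k)"
  shows False
proof -
  have o21: "hinner u2 u1 = 0" using o12 hinner_conj[of u2 u1] by simp
  have o31: "hinner u3 u1 = 0" using o13 hinner_conj[of u3 u1] by simp
  have o32: "hinner u3 u2 = 0" using o23 hinner_conj[of u3 u2] by simp
  have ind: "indep3q u1 u2 u3"
    unfolding indep3q_def
  proof (intro allI impI)
    fix \<alpha> \<beta> \<gamma>
    assume h: "\<forall>i j k. \<alpha> * u1 i j k + \<beta> * u2 i j k + \<gamma> * u3 i j k = 0"
    have z: "(\<lambda>i j k. \<alpha> * u1 i j k + \<beta> * u2 i j k + \<gamma> * u3 i j k) = (\<lambda>i j k. 0)" using h by simp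
    have hz: "hinner w (\<lambda>i j k. 0) = 0" for w by (simp add: hinner_def)
    have "hinner u1 (\<lambda>i j k. \<alpha> * u1 i j k + \<beta> * u2 i j k + \<gamma> * u3 i j k) = \<alpha>"
      "hinner u2 (\<lambda>i j k. \<alpha> * u1 i j k + \<beta> * u2 i j k + \<gamma> * u3 i j k) = \<beta>"
      "hinner u3 (\<lambda>i j k. \<alpha> * u1 i j k + \<beta> * u2 i j k + \<gamma> * u3 i j k) = \<gamma>"
      unfolding hinner_lin3 using n1 n2 n3 o12 o13 o23 o21 o31 o32 by simp_all
    then show "\<alpha> = 0 \<and> \<beta> = 0 \<and> \<gamma> = 0" unfolding z hz by simp
  qed
  obtain a where a: "\<exists>B. \<forall>i m. MA u1 i m = a i * B m" "\<exists>B. \<forall>i m. MA u2 i m = a i * B m" "\<exists>B. \<forall>i m. MA u3 i m = a i * B m"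
    using viewQ[of A_BC MA, OF prodA MA_lin MA_inj prod ind] by blast
  obtain b where b: "\<exists>B. \<forall>i m. MB u1 i m = b i * B m" "\<exists>B. \<forall>i m. MB u2 i m = b i * B m" "\<exists>B. \<forall>i m. MB u3 i m = b i * B m"
    using viewQ[of B_AC MB, OF prodB MB_lin MB_inj prod ind] by blast
  obtain c where c: "\<exists>B. \<forall>i m. MC u1 i m = c i * B m" "\<exists>B. \<forall>i m. MC u2 i m = c i * B m" "\<exists>B. \<forall>i m. MC u3 i m = c i * B m"
    using viewQ[of C_AB MC, OF prodC MC_lin MC_inj prod ind] by blast
  have forms: "\<exists>B C D. (\<forall>i j k. w i j k = a i * B j k) \<and> (\<forall>i j k. w i j k = b j * C i k) \<and> (\<forall>i j k. w i j k = c k * D i j)"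
    if "w \<in> {u1, u2, u3}" for w
  proof -
    have "\<exists>B. \<forall>i m. MA w i m = a i * B m" using a that by auto
    then obtain B where hB: "\<forall>i m. MA w i m = a i * B m" by blast
    have "\<exists>C. \<forall>i m. MB w i m = b i * C m" using b that by auto
    then obtain C where hC: "\<forall>i m. MB w i m = b i * C m" by blast
    have "\<exists>D. \<forall>i m. MC w i m = c i * D m" using c that by auto
    then obtain D where hD: "\<forall>i m. MC w i m = c i * D m" by blast
    have "\<forall>i j k. w i j k = a i * (\<lambda>j k. B (j, k)) j k"
    proof (intro allI)
      fix i j k show "w i j k = a i * (\<lambda>j k. B (j, k)) j k" using spec[OF spec[OF hB, of i], of "(j, k)"] by (simp add: MA_def)
    qed
    moreover have "\<forall>i j k. w i j k = b j * (\<lambda>i k. C (i, k)) i k"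
    proof (intro allI)
      fix i j k show "w i j k = b j * (\<lambda>i k. C (i, k)) i k" using spec[OF spec[OF hC, of j], of "(i, k)"] by (simp add: MB_def)
    qed
    moreover have "\<forall>i j k. w i j k = c k * (\<lambda>i j. D (i, j)) i j"
    proof (intro allI)
      fix i j k show "w i j k = c k * (\<lambda>i j. D (i, j)) i j" using spec[OF spec[OF hD, of k], of "(i, j)"] by (simp add: MC_def)
    qed
    ultimately show ?thesis
      by (intro exI[of _ "\<lambda>j k. B (j, k)"] exI[of _ "\<lambda>i k. C (i, k)"] exI[of _ "\<lambda>i j. D (i, j)"]) simp
  qed
  have "\<exists>i j k. u1 i j k \<noteq> 0"
  proof (rule ccontr)
    assume "\<not> ?thesis"
    then have "hinner u1 u1 = 0" by (simp add: hinner_def)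
    then show False using n1 by simp
  qed
  then obtain i0 j0 k0 where nz: "u1 i0 j0 k0 \<noteq> 0" by blast
  obtain B1 C1 D1 where f1: "\<forall>i j k. u1 i j k = a i * B1 j k" "\<forall>i j k. u1 i j k = b j * C1 i k" "\<forall>i j k. u1 i j k = c k * D1 i j"
    using forms[of u1] by blast
  have anz: "a i0 \<noteq> 0" using f1(1) nz by auto
  have bnz: "b j0 \<noteq> 0" using f1(2) nz by auto
  have cnz: "c k0 \<noteq> 0" using f1(3) nz by auto
  obtain B2 C2 D2 where f2: "\<forall>i j k. u2 i j k = a i * B2 j k" "\<forall>i j k. u2 i j k = b j * C2 i k" "\<forall>i j k. u2 i j k = c k * D2 i j"
    using forms[of u2] by blast
  have e1: "u1 i j k = (a i * b j * c k / (a i0 * b j0 * c k0)) * u1 i0 j0 k0" for i j k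
    using sep_form[OF f1 anz bnz cnz] .
  have e2: "u2 i j k = (a i * b j * c k / (a i0 * b j0 * c k0)) * u2 i0 j0 k0" for i j k
    using sep_form[OF f2 anz bnz cnz] .
  have "\<forall>i j k. u2 i0 j0 k0 * u1 i j k + (- u1 i0 j0 k0) * u2 i j k + 0 * u3 i j k = 0"
  proof (intro allI)
    fix i j k
    show "u2 i0 j0 k0 * u1 i j k + (- u1 i0 j0 k0) * u2 i j k + 0 * u3 i j k = 0"
      unfolding e1[of i j k] e2[of i j k] by (simp add: algebra_simps)
  qed
  then have "u2 i0 j0 k0 = 0 \<and> - u1 i0 j0 k0 = 0 \<and> (0::complex) = 0"
    using ind unfolding indep3q_def by blast
  then have "u1 i0 j0 k0 = 0" by simp
  then show False using nz by simp
qed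




lemma orthonormal_subset: "orthonormal S \<Longrightarrow> T \<subseteq> S \<Longrightarrow> orthonormal T"
  unfolding orthonormal_def by blast

lemma UEB_orthonormal: "UEB_every_bipartition S \<Longrightarrow> orthonormal S"
  unfolding UEB_every_bipartition_def orthonormal_def genuinely_entangled_def pure_state_def by blast

lemma orthonormal_finite:
  assumes "orthonormal S" shows "finite S"
proof (rule ccontr)
  assume "infinite S"
  then obtain T where T: "finite T" "card T = 9" "T \<subseteq> S" using infinite_arbitrarily_large by blast
  have "card T \<le> 8" using card_le8[OF orthonormal_subset[OF assms T(3)] T(1)] .
  then show False using T(2) by simp
qed

lemma orth_insert:
  assumes "orthonormal T" "hinner u u = 1" "\<forall>s\<in>T. hinner s u = 0"
  shows "orthonormal (insert u T)" "u \<notin> T"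
proof -
  have "\<forall>s\<in>T. hinner u s = 0" using assms(3) hinner_conj[of u] by simp
  then show "orthonormal (insert u T)" using assms unfolding orthonormal_def by auto
  show "u \<notin> T" using assms(2,3) by auto
qed

lemma perp_cspan:
  assumes "\<forall>s\<in>S. hinner s w = 0"
  shows "w \<in> orth_compl (cspan S)"
  unfolding orth_compl_def
proof (intro CollectI ballI)
  fix v assume "v \<in> cspan S"
  then obtain T c where T: "finite T" "T \<subseteq> S" "v = (\<lambda>i j k. \<Sum>s\<in>T. c s * s i j k)"
    unfolding cspan_def by blast
  have "hinner v w = (\<Sum>s\<in>T. cnj (c s) * hinner s w)"
    unfolding T(3) using hinner_sum_left[of c "\<lambda>s. s" T w] by simp
  also have "\<dots> = 0" using assms T(2) by (intro sum.neutral) auto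
  finally show "hinner v w = 0" .
qed

lemma product_scale: "product_wrt p v \<Longrightarrow> product_wrt p (\<lambda>i j k. c * v i j k)"
proof (cases p)
  case A_BC
  assume "product_wrt p v"
  then obtain a b where h: "\<forall>i j k. v i j k = a i * b j k" using A_BC by auto
  show ?thesis unfolding A_BC product_wrt.simps
    by (rule exI[of _ "\<lambda>i. c * a i"], rule exI[of _ b]) (simp add: h)
next
  case B_AC
  assume "product_wrt p v"
  then obtain a b where h: "\<forall>i j k. v i j k = a j * b i k" using B_AC by auto
  show ?thesis unfolding B_AC product_wrt.simps
    by (rule exI[of _ "\<lambda>j. c * a j"], rule exI[of _ b]) (simp add: h)
next
  case C_AB
  assume "product_wrt p v"
  then obtain a b where h: "\<forall>i j k. v i j k = a k * b i j" using C_AB by auto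
  show ?thesis unfolding C_AB product_wrt.simps
    by (rule exI[of _ "\<lambda>k. c * a k"], rule exI[of _ b]) (simp add: h)
qed

lemma product_zero: "(\<forall>i j k. v i j k = 0) \<Longrightarrow> product_wrt p v"
proof -
  assume h: "\<forall>i j k. v i j k = 0"
  have "v = (\<lambda>i j k. 0 * v i j k)" using h by (simp add: fun_eq_iff)
  moreover have "product_wrt p v \<or> True" by simp
  show ?thesis
  proof (cases p)
    case A_BC then show ?thesis using h by (auto intro!: exI[of _ "\<lambda>i. 0"])
  next
    case B_AC then show ?thesis using h by (auto intro!: exI[of _ "\<lambda>i. 0"])
  next
    case C_AB then show ?thesis using h by (auto intro!: exI[of _ "\<lambda>i. 0"])
  qed
qed

lemma prod_all:
  assumes U: "UEB_every_bipartition S" and w: "w \<in> orth_compl (cspan S)"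
  shows "product_wrt p w"
proof (cases "nsq w = 0")
  case True
  then show ?thesis using nsq_zero product_zero by blast
next
  case False
  have pure: "pure_state (normalize w)" unfolding pure_state_def using normalize_unit[OF False] .
  have "normalize w \<in> orth_compl (cspan S)"
    using w unfolding orth_compl_def using normalize_orth by blast
  then have "product_wrt p (normalize w)" using U pure unfolding UEB_every_bipartition_def by blast
  then have "product_wrt p (\<lambda>i j k. complex_of_real (sqrt (nsq w)) * normalize w i j k)"
    by (rule product_scale)
  moreover have "(\<lambda>i j k. complex_of_real (sqrt (nsq w)) * normalize w i j k) = w"
    using False nsq_nonneg[of w] by (simp add: normalize_def fun_eq_iff)
  ultimately show ?thesis by simp
qed

lemma part1:
  assumes U: "UEB_every_bipartition S"
  shows "finite S \<and> card S \<in> {6, 7}"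
proof -
  have on: "orthonormal S" using UEB_orthonormal[OF U] .
  have fin: "finite S" using orthonormal_finite[OF on] .
  have le8: "card S \<le> 8" using card_le8[OF on fin] .
  have ne8: "card S \<noteq> 8"
  proof
    assume "card S = 8"
    then have "cspan S = UNIV" using full_cspan[OF on fin] by simp
    then show False using U unfolding UEB_every_bipartition_def by simp
  qed
  have ge6: "card S \<ge> 6"
  proof (rule ccontr)
    assume "\<not> card S \<ge> 6"
    then have c5: "card S \<le> 5" by simp
    obtain u1 where u1: "hinner u1 u1 = 1" "\<forall>s\<in>S. hinner s u1 = 0"
      using exists_orth[OF on fin] c5 by auto
    define S1 where "S1 = insert u1 S"
    have on1: "orthonormal S1" and nin1: "u1 \<notin> S" using orth_insert[OF on u1] S1_def by auto
    have fin1: "finite S1" and c1: "card S1 = card S + 1" using fin nin1 S1_def by auto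
    obtain u2 where u2: "hinner u2 u2 = 1" "\<forall>s\<in>S1. hinner s u2 = 0"
      using exists_orth[OF on1 fin1] c5 c1 by auto
    define S2 where "S2 = insert u2 S1"
    have on2: "orthonormal S2" and nin2: "u2 \<notin> S1" using orth_insert[OF on1 u2] S2_def by auto
    have fin2: "finite S2" and c2: "card S2 = card S1 + 1" using fin1 nin2 S2_def by auto
    obtain u3 where u3: "hinner u3 u3 = 1" "\<forall>s\<in>S2. hinner s u3 = 0"
      using exists_orth[OF on2 fin2] c5 c1 c2 by auto
    have o12: "hinner u1 u2 = 0" using u2 S1_def by simp
    have o13: "hinner u1 u3 = 0" using u3 S1_def S2_def by simp
    have o23: "hinner u2 u3 = 0" using u3 S2_def by simp
    have perpS: "\<forall>s\<in>S. hinner s u1 = 0 \<and> hinner s u2 = 0 \<and> hinner s u3 = 0"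
      using u1 u2 u3 S1_def S2_def by simp
    have prod: "product_wrt p (\<lambda>i j k. \<alpha> * u1 i j k + \<beta> * u2 i j k + \<gamma> * u3 i j k)" for p \<alpha> \<beta> \<gamma>
    proof -
      have "\<forall>s\<in>S. hinner s (\<lambda>i j k. \<alpha> * u1 i j k + \<beta> * u2 i j k + \<gamma> * u3 i j k) = 0"
        using perpS by (simp add: hinner_lin3)
      then show ?thesis using prod_all[OF U perp_cspan] by blast
    qed
    show False using no_three[OF u1(1) u2(1) u3(1) o12 o13 o23 prod] .
  qed
  show ?thesis using fin le8 ne8 ge6 by auto
qed



definition qv :: "complex \<Rightarrow> complex \<Rightarrow> complex \<Rightarrow> complex \<Rightarrow> complex \<Rightarrow> complex \<Rightarrow> complex \<Rightarrow> complex \<Rightarrow> qstate" where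
  "qv x0 x1 x2 x3 x4 x5 x6 x7 = (\<lambda>i j k. if i then (if j then (if k then x7 else x6) else (if k then x5 else x4))
     else (if j then (if k then x3 else x2) else (if k then x1 else x0)))"

lemma minorA: "product_wrt A_BC v \<Longrightarrow> v False j k * v True j' k' = v True j k * v False j' k'"
  by auto
lemma minorB: "product_wrt B_AC v \<Longrightarrow> v i False k * v i' True k' = v i True k * v i' False k'"
  by auto
lemma minorC: "product_wrt C_AB v \<Longrightarrow> v i j False * v i' j' True = v i j True * v i' j' False"
  by auto

lemma distinct_orth: "hinner x x = 1 \<Longrightarrow> hinner x y = 0 \<Longrightarrow> x \<noteq> y"
  by auto

lemma in_cspan: "s \<in> S \<Longrightarrow> s \<in> cspan S"
  unfolding cspan_def
  by (rule CollectI, rule exI[of _ "{s}"], rule exI[of _ "\<lambda>_. 1"]) simp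

lemma cspan_zero:
  assumes "\<forall>s\<in>S. s False False False = 0" "v \<in> cspan S"
  shows "v False False False = 0"
proof -
  obtain T c where T: "finite T" "T \<subseteq> S" "v = (\<lambda>i j k. \<Sum>s\<in>T. c s * s i j k)"
    using assms(2) unfolding cspan_def by blast
  show ?thesis unfolding T(3) using assms(1) T(2) by (auto intro!: sum.neutral)
qed

lemma cspan_ne:
  assumes "\<forall>s\<in>S. s False False False = 0"
  shows "cspan S \<noteq> UNIV"
proof
  assume "cspan S = UNIV"
  then have "(\<lambda>i j k. 1) \<in> cspan S" by simp
  then show False using cspan_zero[OF assms] by fastforce
qed

definition e1 :: qstate where "e1 = qv (0) (1/2) (1/2) (1/2) (1/2) (0) (0) (0)"
lemma e1_pure: "pure_state e1" by (simp add: pure_state_def hinner_expand e1_def qv_def)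
lemma e1_np0: "\<not> product_wrt A_BC e1"
proof
  assume h: "product_wrt A_BC e1"
  show False using minorA[OF h, of False False False True] by (simp add: e1_def qv_def)
qed
lemma e1_np1: "\<not> product_wrt B_AC e1"
proof
  assume h: "product_wrt B_AC e1"
  show False using minorB[OF h, of False False False True] by (simp add: e1_def qv_def)
qed
lemma e1_np2: "\<not> product_wrt C_AB e1"
proof
  assume h: "product_wrt C_AB e1"
  show False using minorC[OF h, of False False False True] by (simp add: e1_def qv_def)
qed
lemma e1_ge: "genuinely_entangled e1"
  unfolding genuinely_entangled_def using e1_pure e1_np0 e1_np1 e1_np2 by (metis bipartition.exhaust)
definition e2 :: qstate where "e2 = qv (0) (1/2) (-1/2) (0) (0) (1/2) (1/2) (0)"
lemma e2_pure: "pure_state e2" by (simp add: pure_state_def hinner_expand e2_def qv_def)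
lemma e2_np0: "\<not> product_wrt A_BC e2"
proof
  assume h: "product_wrt A_BC e2"
  show False using minorA[OF h, of False True True False] by (simp add: e2_def qv_def)
qed
lemma e2_np1: "\<not> product_wrt B_AC e2"
proof
  assume h: "product_wrt B_AC e2"
  show False using minorB[OF h, of False False False True] by (simp add: e2_def qv_def)
qed
lemma e2_np2: "\<not> product_wrt C_AB e2"
proof
  assume h: "product_wrt C_AB e2"
  show False using minorC[OF h, of False False False True] by (simp add: e2_def qv_def)
qed
lemma e2_ge: "genuinely_entangled e2"
  unfolding genuinely_entangled_def using e2_pure e2_np0 e2_np1 e2_np2 by (metis bipartition.exhaust)
definition e3 :: qstate where "e3 = qv (0) (1/2) (0) (-1/2) (0) (0) (-1/2) (1/2)"
lemma e3_pure: "pure_state e3" by (simp add: pure_state_def hinner_expand e3_def qv_def)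
lemma e3_np0: "\<not> product_wrt A_BC e3"
proof
  assume h: "product_wrt A_BC e3"
  show False using minorA[OF h, of False True True False] by (simp add: e3_def qv_def)
qed
lemma e3_np1: "\<not> product_wrt B_AC e3"
proof
  assume h: "product_wrt B_AC e3"
  show False using minorB[OF h, of False True True False] by (simp add: e3_def qv_def)
qed
lemma e3_np2: "\<not> product_wrt C_AB e3"
proof
  assume h: "product_wrt C_AB e3"
  show False using minorC[OF h, of False False True True] by (simp add: e3_def qv_def)
qed
lemma e3_ge: "genuinely_entangled e3"
  unfolding genuinely_entangled_def using e3_pure e3_np0 e3_np1 e3_np2 by (metis bipartition.exhaust)
definition e4 :: qstate where "e4 = qv (0) (1/2) (0) (0) (-1/2) (-1/2) (0) (-1/2)"
lemma e4_pure: "pure_state e4" by (simp add: pure_state_def hinner_expand e4_def qv_def)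
lemma e4_np0: "\<not> product_wrt A_BC e4"
proof
  assume h: "product_wrt A_BC e4"
  show False using minorA[OF h, of False False False True] by (simp add: e4_def qv_def)
qed
lemma e4_np1: "\<not> product_wrt B_AC e4"
proof
  assume h: "product_wrt B_AC e4"
  show False using minorB[OF h, of False True True True] by (simp add: e4_def qv_def)
qed
lemma e4_np2: "\<not> product_wrt C_AB e4"
proof
  assume h: "product_wrt C_AB e4"
  show False using minorC[OF h, of False False True False] by (simp add: e4_def qv_def)
qed
lemma e4_ge: "genuinely_entangled e4"
  unfolding genuinely_entangled_def using e4_pure e4_np0 e4_np1 e4_np2 by (metis bipartition.exhaust)
definition e5 :: qstate where "e5 = qv (0) (0) (1/2) (-1/2) (0) (1/2) (0) (-1/2)"
lemma e5_pure: "pure_state e5" by (simp add: pure_state_def hinner_expand e5_def qv_def)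
lemma e5_np0: "\<not> product_wrt A_BC e5"
proof
  assume h: "product_wrt A_BC e5"
  show False using minorA[OF h, of False True True False] by (simp add: e5_def qv_def)
qed
lemma e5_np1: "\<not> product_wrt B_AC e5"
proof
  assume h: "product_wrt B_AC e5"
  show False using minorB[OF h, of False False True True] by (simp add: e5_def qv_def)
qed
lemma e5_np2: "\<not> product_wrt C_AB e5"
proof
  assume h: "product_wrt C_AB e5"
  show False using minorC[OF h, of False True True False] by (simp add: e5_def qv_def)
qed
lemma e5_ge: "genuinely_entangled e5"
  unfolding genuinely_entangled_def using e5_pure e5_np0 e5_np1 e5_np2 by (metis bipartition.exhaust)
definition e6 :: qstate where "e6 = qv (0) (0) (1/2) (0) (-1/2) (0) (1/2) (1/2)"
lemma e6_pure: "pure_state e6" by (simp add: pure_state_def hinner_expand e6_def qv_def)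
lemma e6_np0: "\<not> product_wrt A_BC e6"
proof
  assume h: "product_wrt A_BC e6"
  show False using minorA[OF h, of False False True False] by (simp add: e6_def qv_def)
qed
lemma e6_np1: "\<not> product_wrt B_AC e6"
proof
  assume h: "product_wrt B_AC e6"
  show False using minorB[OF h, of False False True False] by (simp add: e6_def qv_def)
qed
lemma e6_np2: "\<not> product_wrt C_AB e6"
proof
  assume h: "product_wrt C_AB e6"
  show False using minorC[OF h, of False True True True] by (simp add: e6_def qv_def)
qed
lemma e6_ge: "genuinely_entangled e6"
  unfolding genuinely_entangled_def using e6_pure e6_np0 e6_np1 e6_np2 by (metis bipartition.exhaust)
definition e7 :: qstate where "e7 = qv (0) (0) (0) (1/2) (-1/2) (1/2) (-1/2) (0)"
lemma e7_pure: "pure_state e7" by (simp add: pure_state_def hinner_expand e7_def qv_def)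
lemma e7_np0: "\<not> product_wrt A_BC e7"
proof
  assume h: "product_wrt A_BC e7"
  show False using minorA[OF h, of False False True True] by (simp add: e7_def qv_def)
qed
lemma e7_np1: "\<not> product_wrt B_AC e7"
proof
  assume h: "product_wrt B_AC e7"
  show False using minorB[OF h, of False True True False] by (simp add: e7_def qv_def)
qed
lemma e7_np2: "\<not> product_wrt C_AB e7"
proof
  assume h: "product_wrt C_AB e7"
  show False using minorC[OF h, of False True True False] by (simp add: e7_def qv_def)
qed
lemma e7_ge: "genuinely_entangled e7"
  unfolding genuinely_entangled_def using e7_pure e7_np0 e7_np1 e7_np2 by (metis bipartition.exhaust)
lemma e1_e2: "hinner e1 e2 = 0" by (simp add: hinner_expand e1_def e2_def qv_def)
lemma e2_e1: "hinner e2 e1 = 0" using e1_e2 hinner_conj[of e2 e1] by simp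
lemma e1_ne_e2: "e1 \<noteq> e2" using distinct_orth[OF e1_pure[unfolded pure_state_def] e1_e2] .
lemma e1_e3: "hinner e1 e3 = 0" by (simp add: hinner_expand e1_def e3_def qv_def)
lemma e3_e1: "hinner e3 e1 = 0" using e1_e3 hinner_conj[of e3 e1] by simp
lemma e1_ne_e3: "e1 \<noteq> e3" using distinct_orth[OF e1_pure[unfolded pure_state_def] e1_e3] .
lemma e1_e4: "hinner e1 e4 = 0" by (simp add: hinner_expand e1_def e4_def qv_def)
lemma e4_e1: "hinner e4 e1 = 0" using e1_e4 hinner_conj[of e4 e1] by simp
lemma e1_ne_e4: "e1 \<noteq> e4" using distinct_orth[OF e1_pure[unfolded pure_state_def] e1_e4] .
lemma e1_e5: "hinner e1 e5 = 0" by (simp add: hinner_expand e1_def e5_def qv_def)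
lemma e5_e1: "hinner e5 e1 = 0" using e1_e5 hinner_conj[of e5 e1] by simp
lemma e1_ne_e5: "e1 \<noteq> e5" using distinct_orth[OF e1_pure[unfolded pure_state_def] e1_e5] .
lemma e1_e6: "hinner e1 e6 = 0" by (simp add: hinner_expand e1_def e6_def qv_def)
lemma e6_e1: "hinner e6 e1 = 0" using e1_e6 hinner_conj[of e6 e1] by simp
lemma e1_ne_e6: "e1 \<noteq> e6" using distinct_orth[OF e1_pure[unfolded pure_state_def] e1_e6] .
lemma e1_e7: "hinner e1 e7 = 0" by (simp add: hinner_expand e1_def e7_def qv_def)
lemma e7_e1: "hinner e7 e1 = 0" using e1_e7 hinner_conj[of e7 e1] by simp
lemma e1_ne_e7: "e1 \<noteq> e7" using distinct_orth[OF e1_pure[unfolded pure_state_def] e1_e7] .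
lemma e2_e3: "hinner e2 e3 = 0" by (simp add: hinner_expand e2_def e3_def qv_def)
lemma e3_e2: "hinner e3 e2 = 0" using e2_e3 hinner_conj[of e3 e2] by simp
lemma e2_ne_e3: "e2 \<noteq> e3" using distinct_orth[OF e2_pure[unfolded pure_state_def] e2_e3] .
lemma e2_e4: "hinner e2 e4 = 0" by (simp add: hinner_expand e2_def e4_def qv_def)
lemma e4_e2: "hinner e4 e2 = 0" using e2_e4 hinner_conj[of e4 e2] by simp
lemma e2_ne_e4: "e2 \<noteq> e4" using distinct_orth[OF e2_pure[unfolded pure_state_def] e2_e4] .
lemma e2_e5: "hinner e2 e5 = 0" by (simp add: hinner_expand e2_def e5_def qv_def)
lemma e5_e2: "hinner e5 e2 = 0" using e2_e5 hinner_conj[of e5 e2] by simp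
lemma e2_ne_e5: "e2 \<noteq> e5" using distinct_orth[OF e2_pure[unfolded pure_state_def] e2_e5] .
lemma e2_e6: "hinner e2 e6 = 0" by (simp add: hinner_expand e2_def e6_def qv_def)
lemma e6_e2: "hinner e6 e2 = 0" using e2_e6 hinner_conj[of e6 e2] by simp
lemma e2_ne_e6: "e2 \<noteq> e6" using distinct_orth[OF e2_pure[unfolded pure_state_def] e2_e6] .
lemma e2_e7: "hinner e2 e7 = 0" by (simp add: hinner_expand e2_def e7_def qv_def)
lemma e7_e2: "hinner e7 e2 = 0" using e2_e7 hinner_conj[of e7 e2] by simp
lemma e2_ne_e7: "e2 \<noteq> e7" using distinct_orth[OF e2_pure[unfolded pure_state_def] e2_e7] .
lemma e3_e4: "hinner e3 e4 = 0" by (simp add: hinner_expand e3_def e4_def qv_def)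
lemma e4_e3: "hinner e4 e3 = 0" using e3_e4 hinner_conj[of e4 e3] by simp
lemma e3_ne_e4: "e3 \<noteq> e4" using distinct_orth[OF e3_pure[unfolded pure_state_def] e3_e4] .
lemma e3_e5: "hinner e3 e5 = 0" by (simp add: hinner_expand e3_def e5_def qv_def)
lemma e5_e3: "hinner e5 e3 = 0" using e3_e5 hinner_conj[of e5 e3] by simp
lemma e3_ne_e5: "e3 \<noteq> e5" using distinct_orth[OF e3_pure[unfolded pure_state_def] e3_e5] .
lemma e3_e6: "hinner e3 e6 = 0" by (simp add: hinner_expand e3_def e6_def qv_def)
lemma e6_e3: "hinner e6 e3 = 0" using e3_e6 hinner_conj[of e6 e3] by simp
lemma e3_ne_e6: "e3 \<noteq> e6" using distinct_orth[OF e3_pure[unfolded pure_state_def] e3_e6] .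
lemma e3_e7: "hinner e3 e7 = 0" by (simp add: hinner_expand e3_def e7_def qv_def)
lemma e7_e3: "hinner e7 e3 = 0" using e3_e7 hinner_conj[of e7 e3] by simp
lemma e3_ne_e7: "e3 \<noteq> e7" using distinct_orth[OF e3_pure[unfolded pure_state_def] e3_e7] .
lemma e4_e5: "hinner e4 e5 = 0" by (simp add: hinner_expand e4_def e5_def qv_def)
lemma e5_e4: "hinner e5 e4 = 0" using e4_e5 hinner_conj[of e5 e4] by simp
lemma e4_ne_e5: "e4 \<noteq> e5" using distinct_orth[OF e4_pure[unfolded pure_state_def] e4_e5] .
lemma e4_e6: "hinner e4 e6 = 0" by (simp add: hinner_expand e4_def e6_def qv_def)
lemma e6_e4: "hinner e6 e4 = 0" using e4_e6 hinner_conj[of e6 e4] by simp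
lemma e4_ne_e6: "e4 \<noteq> e6" using distinct_orth[OF e4_pure[unfolded pure_state_def] e4_e6] .
lemma e4_e7: "hinner e4 e7 = 0" by (simp add: hinner_expand e4_def e7_def qv_def)
lemma e7_e4: "hinner e7 e4 = 0" using e4_e7 hinner_conj[of e7 e4] by simp
lemma e4_ne_e7: "e4 \<noteq> e7" using distinct_orth[OF e4_pure[unfolded pure_state_def] e4_e7] .
lemma e5_e6: "hinner e5 e6 = 0" by (simp add: hinner_expand e5_def e6_def qv_def)
lemma e6_e5: "hinner e6 e5 = 0" using e5_e6 hinner_conj[of e6 e5] by simp
lemma e5_ne_e6: "e5 \<noteq> e6" using distinct_orth[OF e5_pure[unfolded pure_state_def] e5_e6] .
lemma e5_e7: "hinner e5 e7 = 0" by (simp add: hinner_expand e5_def e7_def qv_def)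
lemma e7_e5: "hinner e7 e5 = 0" using e5_e7 hinner_conj[of e7 e5] by simp
lemma e5_ne_e7: "e5 \<noteq> e7" using distinct_orth[OF e5_pure[unfolded pure_state_def] e5_e7] .
lemma e6_e7: "hinner e6 e7 = 0" by (simp add: hinner_expand e6_def e7_def qv_def)
lemma e7_e6: "hinner e7 e6 = 0" using e6_e7 hinner_conj[of e7 e6] by simp
lemma e6_ne_e7: "e6 \<noteq> e7" using distinct_orth[OF e6_pure[unfolded pure_state_def] e6_e7] .
definition Se :: "qstate set" where "Se = {e1, e2, e3, e4, e5, e6, e7}"
lemma Se_card: "card Se = 7" by (simp add: Se_def e1_ne_e2 e1_ne_e3 e1_ne_e4 e1_ne_e5 e1_ne_e6 e1_ne_e7 e2_ne_e3 e2_ne_e4 e2_ne_e5 e2_ne_e6 e2_ne_e7 e3_ne_e4 e3_ne_e5 e3_ne_e6 e3_ne_e7 e4_ne_e5 e4_ne_e6 e4_ne_e7 e5_ne_e6 e5_ne_e7 e6_ne_e7)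
lemma Se_orth: "\<forall>s\<in>Se. \<forall>t\<in>Se. s \<noteq> t \<longrightarrow> hinner s t = 0" by (auto simp: Se_def e1_e2 e2_e1 e1_e3 e3_e1 e1_e4 e4_e1 e1_e5 e5_e1 e1_e6 e6_e1 e1_e7 e7_e1 e2_e3 e3_e2 e2_e4 e4_e2 e2_e5 e5_e2 e2_e6 e6_e2 e2_e7 e7_e2 e3_e4 e4_e3 e3_e5 e5_e3 e3_e6 e6_e3 e3_e7 e7_e3 e4_e5 e5_e4 e4_e6 e6_e4 e4_e7 e7_e4 e5_e6 e6_e5 e5_e7 e7_e5 e6_e7 e7_e6)
lemma Se_ge: "\<forall>s\<in>Se. genuinely_entangled s" by (auto simp: Se_def e1_ge e2_ge e3_ge e4_ge e5_ge e6_ge e7_ge)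
lemma Se_z: "\<forall>s\<in>Se. s False False False = 0" by (auto simp: Se_def e1_def e2_def e3_def e4_def e5_def e6_def e7_def qv_def)
lemma Se_coord:
  assumes "v \<in> orth_compl (cspan Se)"
  shows "v False False True = 0" "v False True False = 0" "v False True True = 0" "v True False False = 0" "v True False True = 0" "v True True False = 0" "v True True True = 0"
proof -
  have h: "hinner s v = 0" if "s \<in> Se" for s using assms in_cspan[OF that] unfolding orth_compl_def by blast
  have h1: "hinner e1 v = 0" using h by (simp add: Se_def)
  have h2: "hinner e2 v = 0" using h by (simp add: Se_def)
  have h3: "hinner e3 v = 0" using h by (simp add: Se_def)
  have h4: "hinner e4 v = 0" using h by (simp add: Se_def)
  have h5: "hinner e5 v = 0" using h by (simp add: Se_def)
  have h6: "hinner e6 v = 0" using h by (simp add: Se_def)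
  have h7: "hinner e7 v = 0" using h by (simp add: Se_def)
  have "v False False True = (1/2) * hinner e1 v + (1/2) * hinner e2 v + (1/2) * hinner e3 v + (1/2) * hinner e4 v + (0) * hinner e5 v + (0) * hinner e6 v + (0) * hinner e7 v"
    by (simp add: hinner_expand e1_def e2_def e3_def e4_def e5_def e6_def e7_def qv_def field_simps)
  then show "v False False True = 0" by (simp add: h1 h2 h3 h4 h5 h6 h7)
  have "v False True False = (1/2) * hinner e1 v + (-1/2) * hinner e2 v + (0) * hinner e3 v + (0) * hinner e4 v + (1/2) * hinner e5 v + (1/2) * hinner e6 v + (0) * hinner e7 v"
    by (simp add: hinner_expand e1_def e2_def e3_def e4_def e5_def e6_def e7_def qv_def field_simps)
  then show "v False True False = 0" by (simp add: h1 h2 h3 h4 h5 h6 h7)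
  have "v False True True = (1/2) * hinner e1 v + (0) * hinner e2 v + (-1/2) * hinner e3 v + (0) * hinner e4 v + (-1/2) * hinner e5 v + (0) * hinner e6 v + (1/2) * hinner e7 v"
    by (simp add: hinner_expand e1_def e2_def e3_def e4_def e5_def e6_def e7_def qv_def field_simps)
  then show "v False True True = 0" by (simp add: h1 h2 h3 h4 h5 h6 h7)
  have "v True False False = (1/2) * hinner e1 v + (0) * hinner e2 v + (0) * hinner e3 v + (-1/2) * hinner e4 v + (0) * hinner e5 v + (-1/2) * hinner e6 v + (-1/2) * hinner e7 v"
    by (simp add: hinner_expand e1_def e2_def e3_def e4_def e5_def e6_def e7_def qv_def field_simps)
  then show "v True False False = 0" by (simp add: h1 h2 h3 h4 h5 h6 h7)
  have "v True False True = (0) * hinner e1 v + (1/2) * hinner e2 v + (0) * hinner e3 v + (-1/2) * hinner e4 v + (1/2) * hinner e5 v + (0) * hinner e6 v + (1/2) * hinner e7 v"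
    by (simp add: hinner_expand e1_def e2_def e3_def e4_def e5_def e6_def e7_def qv_def field_simps)
  then show "v True False True = 0" by (simp add: h1 h2 h3 h4 h5 h6 h7)
  have "v True True False = (0) * hinner e1 v + (1/2) * hinner e2 v + (-1/2) * hinner e3 v + (0) * hinner e4 v + (0) * hinner e5 v + (1/2) * hinner e6 v + (-1/2) * hinner e7 v"
    by (simp add: hinner_expand e1_def e2_def e3_def e4_def e5_def e6_def e7_def qv_def field_simps)
  then show "v True True False = 0" by (simp add: h1 h2 h3 h4 h5 h6 h7)
  have "v True True True = (0) * hinner e1 v + (0) * hinner e2 v + (1/2) * hinner e3 v + (-1/2) * hinner e4 v + (-1/2) * hinner e5 v + (1/2) * hinner e6 v + (0) * hinner e7 v"
    by (simp add: hinner_expand e1_def e2_def e3_def e4_def e5_def e6_def e7_def qv_def field_simps)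
  then show "v True True True = 0" by (simp add: h1 h2 h3 h4 h5 h6 h7)
qed
definition f1 :: qstate where "f1 = qv (0) (0) (1/2) (1/2) (1/2) (-1/2) (0) (0)"
lemma f1_pure: "pure_state f1" by (simp add: pure_state_def hinner_expand f1_def qv_def)
lemma f1_np0: "\<not> product_wrt A_BC f1"
proof
  assume h: "product_wrt A_BC f1"
  show False using minorA[OF h, of False False True False] by (simp add: f1_def qv_def)
qed
lemma f1_np1: "\<not> product_wrt B_AC f1"
proof
  assume h: "product_wrt B_AC f1"
  show False using minorB[OF h, of False False True False] by (simp add: f1_def qv_def)
qed
lemma f1_np2: "\<not> product_wrt C_AB f1"
proof
  assume h: "product_wrt C_AB f1"
  show False using minorC[OF h, of False True True False] by (simp add: f1_def qv_def)
qed
lemma f1_ge: "genuinely_entangled f1"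
  unfolding genuinely_entangled_def using f1_pure f1_np0 f1_np1 f1_np2 by (metis bipartition.exhaust)
definition f2 :: qstate where "f2 = qv (0) (0) (1/2) (-1/2) (1/2) (1/2) (0) (0)"
lemma f2_pure: "pure_state f2" by (simp add: pure_state_def hinner_expand f2_def qv_def)
lemma f2_np0: "\<not> product_wrt A_BC f2"
proof
  assume h: "product_wrt A_BC f2"
  show False using minorA[OF h, of False False True False] by (simp add: f2_def qv_def)
qed
lemma f2_np1: "\<not> product_wrt B_AC f2"
proof
  assume h: "product_wrt B_AC f2"
  show False using minorB[OF h, of False False True False] by (simp add: f2_def qv_def)
qed
lemma f2_np2: "\<not> product_wrt C_AB f2"
proof
  assume h: "product_wrt C_AB f2"
  show False using minorC[OF h, of False True True False] by (simp add: f2_def qv_def)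
qed
lemma f2_ge: "genuinely_entangled f2"
  unfolding genuinely_entangled_def using f2_pure f2_np0 f2_np1 f2_np2 by (metis bipartition.exhaust)
definition f3 :: qstate where "f3 = qv (0) (0) (1/2) (0) (-1/2) (0) (1/2) (1/2)"
lemma f3_pure: "pure_state f3" by (simp add: pure_state_def hinner_expand f3_def qv_def)
lemma f3_np0: "\<not> product_wrt A_BC f3"
proof
  assume h: "product_wrt A_BC f3"
  show False using minorA[OF h, of False False True False] by (simp add: f3_def qv_def)
qed
lemma f3_np1: "\<not> product_wrt B_AC f3"
proof
  assume h: "product_wrt B_AC f3"
  show False using minorB[OF h, of False False True False] by (simp add: f3_def qv_def)
qed
lemma f3_np2: "\<not> product_wrt C_AB f3"
proof
  assume h: "product_wrt C_AB f3"
  show False using minorC[OF h, of False True True True] by (simp add: f3_def qv_def)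
qed
lemma f3_ge: "genuinely_entangled f3"
  unfolding genuinely_entangled_def using f3_pure f3_np0 f3_np1 f3_np2 by (metis bipartition.exhaust)
definition f4 :: qstate where "f4 = qv (0) (0) (1/2) (0) (-1/2) (0) (-1/2) (-1/2)"
lemma f4_pure: "pure_state f4" by (simp add: pure_state_def hinner_expand f4_def qv_def)
lemma f4_np0: "\<not> product_wrt A_BC f4"
proof
  assume h: "product_wrt A_BC f4"
  show False using minorA[OF h, of False False True False] by (simp add: f4_def qv_def)
qed
lemma f4_np1: "\<not> product_wrt B_AC f4"
proof
  assume h: "product_wrt B_AC f4"
  show False using minorB[OF h, of False False True False] by (simp add: f4_def qv_def)
qed
lemma f4_np2: "\<not> product_wrt C_AB f4"
proof
  assume h: "product_wrt C_AB f4"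
  show False using minorC[OF h, of False True True True] by (simp add: f4_def qv_def)
qed
lemma f4_ge: "genuinely_entangled f4"
  unfolding genuinely_entangled_def using f4_pure f4_np0 f4_np1 f4_np2 by (metis bipartition.exhaust)
definition f5 :: qstate where "f5 = qv (0) (0) (0) (1/2) (0) (1/2) (1/2) (-1/2)"
lemma f5_pure: "pure_state f5" by (simp add: pure_state_def hinner_expand f5_def qv_def)
lemma f5_np0: "\<not> product_wrt A_BC f5"
proof
  assume h: "product_wrt A_BC f5"
  show False using minorA[OF h, of False True True True] by (simp add: f5_def qv_def)
qed
lemma f5_np1: "\<not> product_wrt B_AC f5"
proof
  assume h: "product_wrt B_AC f5"
  show False using minorB[OF h, of False True True True] by (simp add: f5_def qv_def)
qed
lemma f5_np2: "\<not> product_wrt C_AB f5"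
proof
  assume h: "product_wrt C_AB f5"
  show False using minorC[OF h, of False True True True] by (simp add: f5_def qv_def)
qed
lemma f5_ge: "genuinely_entangled f5"
  unfolding genuinely_entangled_def using f5_pure f5_np0 f5_np1 f5_np2 by (metis bipartition.exhaust)
definition f6 :: qstate where "f6 = qv (0) (0) (0) (1/2) (0) (1/2) (-1/2) (1/2)"
lemma f6_pure: "pure_state f6" by (simp add: pure_state_def hinner_expand f6_def qv_def)
lemma f6_np0: "\<not> product_wrt A_BC f6"
proof
  assume h: "product_wrt A_BC f6"
  show False using minorA[OF h, of False True True True] by (simp add: f6_def qv_def)
qed
lemma f6_np1: "\<not> product_wrt B_AC f6"
proof
  assume h: "product_wrt B_AC f6"
  show False using minorB[OF h, of False True True True] by (simp add: f6_def qv_def)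
qed
lemma f6_np2: "\<not> product_wrt C_AB f6"
proof
  assume h: "product_wrt C_AB f6"
  show False using minorC[OF h, of False True True True] by (simp add: f6_def qv_def)
qed
lemma f6_ge: "genuinely_entangled f6"
  unfolding genuinely_entangled_def using f6_pure f6_np0 f6_np1 f6_np2 by (metis bipartition.exhaust)
lemma f1_f2: "hinner f1 f2 = 0" by (simp add: hinner_expand f1_def f2_def qv_def)
lemma f2_f1: "hinner f2 f1 = 0" using f1_f2 hinner_conj[of f2 f1] by simp
lemma f1_ne_f2: "f1 \<noteq> f2" using distinct_orth[OF f1_pure[unfolded pure_state_def] f1_f2] .
lemma f1_f3: "hinner f1 f3 = 0" by (simp add: hinner_expand f1_def f3_def qv_def)
lemma f3_f1: "hinner f3 f1 = 0" using f1_f3 hinner_conj[of f3 f1] by simp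
lemma f1_ne_f3: "f1 \<noteq> f3" using distinct_orth[OF f1_pure[unfolded pure_state_def] f1_f3] .
lemma f1_f4: "hinner f1 f4 = 0" by (simp add: hinner_expand f1_def f4_def qv_def)
lemma f4_f1: "hinner f4 f1 = 0" using f1_f4 hinner_conj[of f4 f1] by simp
lemma f1_ne_f4: "f1 \<noteq> f4" using distinct_orth[OF f1_pure[unfolded pure_state_def] f1_f4] .
lemma f1_f5: "hinner f1 f5 = 0" by (simp add: hinner_expand f1_def f5_def qv_def)
lemma f5_f1: "hinner f5 f1 = 0" using f1_f5 hinner_conj[of f5 f1] by simp
lemma f1_ne_f5: "f1 \<noteq> f5" using distinct_orth[OF f1_pure[unfolded pure_state_def] f1_f5] .
lemma f1_f6: "hinner f1 f6 = 0" by (simp add: hinner_expand f1_def f6_def qv_def)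
lemma f6_f1: "hinner f6 f1 = 0" using f1_f6 hinner_conj[of f6 f1] by simp
lemma f1_ne_f6: "f1 \<noteq> f6" using distinct_orth[OF f1_pure[unfolded pure_state_def] f1_f6] .
lemma f2_f3: "hinner f2 f3 = 0" by (simp add: hinner_expand f2_def f3_def qv_def)
lemma f3_f2: "hinner f3 f2 = 0" using f2_f3 hinner_conj[of f3 f2] by simp
lemma f2_ne_f3: "f2 \<noteq> f3" using distinct_orth[OF f2_pure[unfolded pure_state_def] f2_f3] .
lemma f2_f4: "hinner f2 f4 = 0" by (simp add: hinner_expand f2_def f4_def qv_def)
lemma f4_f2: "hinner f4 f2 = 0" using f2_f4 hinner_conj[of f4 f2] by simp
lemma f2_ne_f4: "f2 \<noteq> f4" using distinct_orth[OF f2_pure[unfolded pure_state_def] f2_f4] .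
lemma f2_f5: "hinner f2 f5 = 0" by (simp add: hinner_expand f2_def f5_def qv_def)
lemma f5_f2: "hinner f5 f2 = 0" using f2_f5 hinner_conj[of f5 f2] by simp
lemma f2_ne_f5: "f2 \<noteq> f5" using distinct_orth[OF f2_pure[unfolded pure_state_def] f2_f5] .
lemma f2_f6: "hinner f2 f6 = 0" by (simp add: hinner_expand f2_def f6_def qv_def)
lemma f6_f2: "hinner f6 f2 = 0" using f2_f6 hinner_conj[of f6 f2] by simp
lemma f2_ne_f6: "f2 \<noteq> f6" using distinct_orth[OF f2_pure[unfolded pure_state_def] f2_f6] .
lemma f3_f4: "hinner f3 f4 = 0" by (simp add: hinner_expand f3_def f4_def qv_def)
lemma f4_f3: "hinner f4 f3 = 0" using f3_f4 hinner_conj[of f4 f3] by simp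
lemma f3_ne_f4: "f3 \<noteq> f4" using distinct_orth[OF f3_pure[unfolded pure_state_def] f3_f4] .
lemma f3_f5: "hinner f3 f5 = 0" by (simp add: hinner_expand f3_def f5_def qv_def)
lemma f5_f3: "hinner f5 f3 = 0" using f3_f5 hinner_conj[of f5 f3] by simp
lemma f3_ne_f5: "f3 \<noteq> f5" using distinct_orth[OF f3_pure[unfolded pure_state_def] f3_f5] .
lemma f3_f6: "hinner f3 f6 = 0" by (simp add: hinner_expand f3_def f6_def qv_def)
lemma f6_f3: "hinner f6 f3 = 0" using f3_f6 hinner_conj[of f6 f3] by simp
lemma f3_ne_f6: "f3 \<noteq> f6" using distinct_orth[OF f3_pure[unfolded pure_state_def] f3_f6] .
lemma f4_f5: "hinner f4 f5 = 0" by (simp add: hinner_expand f4_def f5_def qv_def)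
lemma f5_f4: "hinner f5 f4 = 0" using f4_f5 hinner_conj[of f5 f4] by simp
lemma f4_ne_f5: "f4 \<noteq> f5" using distinct_orth[OF f4_pure[unfolded pure_state_def] f4_f5] .
lemma f4_f6: "hinner f4 f6 = 0" by (simp add: hinner_expand f4_def f6_def qv_def)
lemma f6_f4: "hinner f6 f4 = 0" using f4_f6 hinner_conj[of f6 f4] by simp
lemma f4_ne_f6: "f4 \<noteq> f6" using distinct_orth[OF f4_pure[unfolded pure_state_def] f4_f6] .
lemma f5_f6: "hinner f5 f6 = 0" by (simp add: hinner_expand f5_def f6_def qv_def)
lemma f6_f5: "hinner f6 f5 = 0" using f5_f6 hinner_conj[of f6 f5] by simp
lemma f5_ne_f6: "f5 \<noteq> f6" using distinct_orth[OF f5_pure[unfolded pure_state_def] f5_f6] .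
definition Sf :: "qstate set" where "Sf = {f1, f2, f3, f4, f5, f6}"
lemma Sf_card: "card Sf = 6" by (simp add: Sf_def f1_ne_f2 f1_ne_f3 f1_ne_f4 f1_ne_f5 f1_ne_f6 f2_ne_f3 f2_ne_f4 f2_ne_f5 f2_ne_f6 f3_ne_f4 f3_ne_f5 f3_ne_f6 f4_ne_f5 f4_ne_f6 f5_ne_f6)
lemma Sf_orth: "\<forall>s\<in>Sf. \<forall>t\<in>Sf. s \<noteq> t \<longrightarrow> hinner s t = 0" by (auto simp: Sf_def f1_f2 f2_f1 f1_f3 f3_f1 f1_f4 f4_f1 f1_f5 f5_f1 f1_f6 f6_f1 f2_f3 f3_f2 f2_f4 f4_f2 f2_f5 f5_f2 f2_f6 f6_f2 f3_f4 f4_f3 f3_f5 f5_f3 f3_f6 f6_f3 f4_f5 f5_f4 f4_f6 f6_f4 f5_f6 f6_f5)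
lemma Sf_ge: "\<forall>s\<in>Sf. genuinely_entangled s" by (auto simp: Sf_def f1_ge f2_ge f3_ge f4_ge f5_ge f6_ge)
lemma Sf_z: "\<forall>s\<in>Sf. s False False False = 0" by (auto simp: Sf_def f1_def f2_def f3_def f4_def f5_def f6_def qv_def)
lemma Sf_coord:
  assumes "v \<in> orth_compl (cspan Sf)"
  shows "v False True False = 0" "v False True True = 0" "v True False False = 0" "v True False True = 0" "v True True False = 0" "v True True True = 0"
proof -
  have h: "hinner s v = 0" if "s \<in> Sf" for s using assms in_cspan[OF that] unfolding orth_compl_def by blast
  have h1: "hinner f1 v = 0" using h by (simp add: Sf_def)
  have h2: "hinner f2 v = 0" using h by (simp add: Sf_def)
  have h3: "hinner f3 v = 0" using h by (simp add: Sf_def)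
  have h4: "hinner f4 v = 0" using h by (simp add: Sf_def)
  have h5: "hinner f5 v = 0" using h by (simp add: Sf_def)
  have h6: "hinner f6 v = 0" using h by (simp add: Sf_def)
  have "v False True False = (1/2) * hinner f1 v + (1/2) * hinner f2 v + (1/2) * hinner f3 v + (1/2) * hinner f4 v + (0) * hinner f5 v + (0) * hinner f6 v"
    by (simp add: hinner_expand f1_def f2_def f3_def f4_def f5_def f6_def qv_def field_simps)
  then show "v False True False = 0" by (simp add: h1 h2 h3 h4 h5 h6)
  have "v False True True = (1/2) * hinner f1 v + (-1/2) * hinner f2 v + (0) * hinner f3 v + (0) * hinner f4 v + (1/2) * hinner f5 v + (1/2) * hinner f6 v"
    by (simp add: hinner_expand f1_def f2_def f3_def f4_def f5_def f6_def qv_def field_simps)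
  then show "v False True True = 0" by (simp add: h1 h2 h3 h4 h5 h6)
  have "v True False False = (1/2) * hinner f1 v + (1/2) * hinner f2 v + (-1/2) * hinner f3 v + (-1/2) * hinner f4 v + (0) * hinner f5 v + (0) * hinner f6 v"
    by (simp add: hinner_expand f1_def f2_def f3_def f4_def f5_def f6_def qv_def field_simps)
  then show "v True False False = 0" by (simp add: h1 h2 h3 h4 h5 h6)
  have "v True False True = (-1/2) * hinner f1 v + (1/2) * hinner f2 v + (0) * hinner f3 v + (0) * hinner f4 v + (1/2) * hinner f5 v + (1/2) * hinner f6 v"
    by (simp add: hinner_expand f1_def f2_def f3_def f4_def f5_def f6_def qv_def field_simps)
  then show "v True False True = 0" by (simp add: h1 h2 h3 h4 h5 h6)
  have "v True True False = (0) * hinner f1 v + (0) * hinner f2 v + (1/2) * hinner f3 v + (-1/2) * hinner f4 v + (1/2) * hinner f5 v + (-1/2) * hinner f6 v"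
    by (simp add: hinner_expand f1_def f2_def f3_def f4_def f5_def f6_def qv_def field_simps)
  then show "v True True False = 0" by (simp add: h1 h2 h3 h4 h5 h6)
  have "v True True True = (0) * hinner f1 v + (0) * hinner f2 v + (1/2) * hinner f3 v + (-1/2) * hinner f4 v + (-1/2) * hinner f5 v + (1/2) * hinner f6 v"
    by (simp add: hinner_expand f1_def f2_def f3_def f4_def f5_def f6_def qv_def field_simps)
  then show "v True True True = 0" by (simp add: h1 h2 h3 h4 h5 h6)
qed



lemma Se_UEB: "UEB_every_bipartition Se"
  unfolding UEB_every_bipartition_def
proof (intro conjI Se_ge Se_orth cspan_ne[OF Se_z] allI ballI impI)
  fix p v assume v: "v \<in> orth_compl (cspan Se)"
  note z = Se_coord[OF v]
  show "product_wrt p v"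
  proof (cases p)
    case A_BC
    have h: "\<forall>i j k. v i j k = (if i then 0 else 1) * v False j k"
      using z by (intro allI, case_tac i; case_tac j; case_tac k) simp_all
    show ?thesis unfolding A_BC product_wrt.simps
      by (rule exI[of _ "\<lambda>i. if i then 0 else 1"], rule exI[of _ "\<lambda>j k. v False j k"]) (rule h)
  next
    case B_AC
    have h: "\<forall>i j k. v i j k = (if j then 0 else 1) * v i False k"
      using z by (intro allI, case_tac i; case_tac j; case_tac k) simp_all
    show ?thesis unfolding B_AC product_wrt.simps
      by (rule exI[of _ "\<lambda>j. if j then 0 else 1"], rule exI[of _ "\<lambda>i k. v i False k"]) (rule h)
  next
    case C_AB
    have h: "\<forall>i j k. v i j k = (if k then 0 else 1) * v i j False"
      using z by (intro allI, case_tac i; case_tac j; case_tac k) simp_all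
    show ?thesis unfolding C_AB product_wrt.simps
      by (rule exI[of _ "\<lambda>k. if k then 0 else 1"], rule exI[of _ "\<lambda>i j. v i j False"]) (rule h)
  qed
qed

lemma Sf_UEB: "UEB_every_bipartition Sf"
  unfolding UEB_every_bipartition_def
proof (intro conjI Sf_ge Sf_orth cspan_ne[OF Sf_z] allI ballI impI)
  fix p v assume v: "v \<in> orth_compl (cspan Sf)"
  note z = Sf_coord[OF v]
  show "product_wrt p v"
  proof (cases p)
    case A_BC
    have h: "\<forall>i j k. v i j k = (if i then 0 else 1) * v False j k"
      using z by (intro allI, case_tac i; case_tac j; case_tac k) simp_all
    show ?thesis unfolding A_BC product_wrt.simps
      by (rule exI[of _ "\<lambda>i. if i then 0 else 1"], rule exI[of _ "\<lambda>j k. v False j k"]) (rule h)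
  next
    case B_AC
    have h: "\<forall>i j k. v i j k = (if j then 0 else 1) * v i False k"
      using z by (intro allI, case_tac i; case_tac j; case_tac k) simp_all
    show ?thesis unfolding B_AC product_wrt.simps
      by (rule exI[of _ "\<lambda>j. if j then 0 else 1"], rule exI[of _ "\<lambda>i k. v i False k"]) (rule h)
  next
    case C_AB
    have h: "\<forall>i j k. v i j k = v False False k * (if i \<or> j then 0 else 1)"
      using z by (intro allI, case_tac i; case_tac j; case_tac k) simp_all
    show ?thesis unfolding C_AB product_wrt.simps
      by (rule exI[of _ "\<lambda>k. v False False k"], rule exI[of _ "\<lambda>i j. if i \<or> j then 0 else 1"]) (rule h)
  qed
qed


theorem proposition5:
  shows "(\<forall>S. UEB_every_bipartition S \<longrightarrow> finite S \<and> card S \<in> {6, 7})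
         \<and> (\<exists>S. UEB_every_bipartition S \<and> card S = 6)
         \<and> (\<exists>S. UEB_every_bipartition S \<and> card S = 7)"
  using part1 Se_UEB Se_card Sf_UEB Sf_card by blast

end
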